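(* Let $X,Y$ be $c$-free with respect to $(\varphi,\psi)$ on $\mathbb{C}\langle X,Y\rangle$. Let $\omega_X,\omega_Y$ be the unique formal power series in $z$ with zero constant term satisfying $\omega_X(z)=z\,\tilde\eta^\psi_Y(\omega_Y(z))$ and $\omega_Y(z)=z\,\tilde\eta^\psi_X(\omega_X(z))$ (the subordination functions of the free multiplicative convolution w.r.t. $\psi$, satisfying $M^\psi_{XY}(z)=M^\psi_X(\omega_X(z))$). Then $$M^\varphi_{XY}(z)=\frac{1}{1-z\,\tilde\eta^\varphi_X(\omega_X(z))\,\tilde\eta^\varphi_Y(\omega_Y(z))}.$$ Moreover, assuming $\psi(X)\neq0$ and $\psi(Y)\neq0$ and setting $\Sigma^\varphi_T=\tilde\eta^\varphi_T\circ(\eta^\psi_T)^{-1}$ for $T\in\{X,Y,XY\}$ (compositional inverse), one has $\Sigma^\varphi_{XY}=\Sigma^\varphi_X\cdot\Sigma^\varphi_Y$.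
   Context: $X,Y$ $c$-free w.r.t. $(\varphi,\psi)$ (unital functionals on $\mathbb{C}\langle X,Y\rangle$): $\psi(u_1\cdots u_n)=0$ and $\varphi(u_1\cdots u_n)=\prod\varphi(u_j)$ whenever the $u_j$ alternate between $\mathbb{C}\langle X\rangle$, $\mathbb{C}\langle Y\rangle$ with $\psi(u_j)=0$. For a functional $\theta$ and element $T$: moment generating function $M^\theta_T(z)=1+\sum_{n\ge1}\theta(T^n)z^n$; Boolean transform $\eta^\theta_T(z)=\sum_{n\ge1}\beta^\theta_n(T,\dots,T)z^n$ where $\beta^\theta_n$ are Boolean cumulants ($\theta(a_1\cdots a_n)=\sum_k\beta^\theta_k(a_1,\dots,a_k)\theta(a_{k+1}\cdots a_n)$), so that $M^\theta_T=(1-\eta^\theta_T)^{-1}$; shifted Boolean transform $\tilde\eta^\theta_T(z)=\eta^\theta_T(z)/z$. All identities are identities of formal power series in $z$. *)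

theory Defs
  imports Complex_Main "HOL-Computational_Algebra.Formal_Power_Series"
          "HOL-Computational_Algebra.Polynomial"
begin

text \<open>Letters of the free monoid on two generators X, Y. A linear functional on
  C<X,Y> is determined by its values on words, so functionals are modelled as
  maps from words to complex numbers.\<close>
datatype letter = LX | LY

type_synonym functional = "letter list \<Rightarrow> complex"

definition unital :: "functional \<Rightarrow> bool" where
  "unital \<theta> \<longleftrightarrow> \<theta> [] = 1"

text \<open>Value of the (linearly extended) functional on w * u_1 * ... * u_n, where
  each u_j = p_j(a_j) is a polynomial in a single generator a_j.\<close>
fun ev_prod :: "functional \<Rightarrow> (letter \<times> complex poly) list \<Rightarrow> letter list \<Rightarrow> complex" where
  "ev_prod \<theta> [] w = \<theta> w"
| "ev_prod \<theta> ((a, p) # us) w =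
     (\<Sum>k\<le>degree p. coeff p k * ev_prod \<theta> us (w @ replicate k a))"

definition ev :: "functional \<Rightarrow> (letter \<times> complex poly) list \<Rightarrow> complex" where
  "ev \<theta> us = ev_prod \<theta> us []"

definition alternating :: "(letter \<times> complex poly) list \<Rightarrow> bool" where
  "alternating us \<longleftrightarrow> (\<forall>i. Suc i < length us \<longrightarrow> fst (us ! i) \<noteq> fst (us ! Suc i))"

definition c_free :: "functional \<Rightarrow> functional \<Rightarrow> bool" where
  "c_free \<phi> \<psi> \<longleftrightarrow> unital \<phi> \<and> unital \<psi> \<and>
     (\<forall>us. us \<noteq> [] \<and> alternating us \<and> (\<forall>u\<in>set us. ev \<psi> [u] = 0) \<longrightarrow>
        ev \<psi> us = 0 \<and> ev \<phi> us = (\<Prod>u\<leftarrow>us. ev \<phi> [u]))"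

definition wX :: "nat \<Rightarrow> letter list" where "wX n = replicate n LX"
definition wY :: "nat \<Rightarrow> letter list" where "wY n = replicate n LY"
definition wXY :: "nat \<Rightarrow> letter list" where "wXY n = concat (replicate n [LX, LY])"

definition moment_fps :: "functional \<Rightarrow> (nat \<Rightarrow> letter list) \<Rightarrow> complex fps" where
  "moment_fps \<theta> T = Abs_fps (\<lambda>n. if n = 0 then 1 else \<theta> (T n))"

text \<open>Boolean cumulants beta_n(T,...,T) from the moment sequence m n = theta(T^n):
  m n = sum_{k=1..n} beta_k m (n-k), with m 0 = 1.\<close>
fun bool_cum :: "(nat \<Rightarrow> complex) \<Rightarrow> nat \<Rightarrow> complex" where
  "bool_cum m n = (if n = 0 then 0 else
      m n - (\<Sum>k\<in>{1..<n}. bool_cum m k * m (n - k)))"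

definition eta :: "functional \<Rightarrow> (nat \<Rightarrow> letter list) \<Rightarrow> complex fps" where
  "eta \<theta> T = Abs_fps (bool_cum (\<lambda>k. \<theta> (T k)))"

definition eta_tilde :: "functional \<Rightarrow> (nat \<Rightarrow> letter list) \<Rightarrow> complex fps" where
  "eta_tilde \<theta> T = fps_shift 1 (eta \<theta> T)"

definition Sigma_tr :: "functional \<Rightarrow> functional \<Rightarrow> (nat \<Rightarrow> letter list) \<Rightarrow> complex fps" where
  "Sigma_tr \<phi> \<psi> T = eta_tilde \<phi> T oo fps_inv (eta \<psi> T)"

end

theory Submission
  imports Defs "HOL-Library.Poly_Mapping"
begin

notation fps_nth (infixl \<open>$\<close> 75)

instantiation list :: (type) monoid_add
begin
definition zero_list_def: "0 = []"
definition plus_list_def: "xs + ys = xs @ ys"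
instance by standard (auto simp: zero_list_def plus_list_def)
end

type_synonym nc = "letter list \<Rightarrow>\<^sub>0 complex"

definition evalA :: "functional \<Rightarrow> nc \<Rightarrow> complex" where
  "evalA \<theta> p = (\<Sum>w. Poly_Mapping.lookup p w * \<theta> w)"

lemma evalA_add: "evalA \<theta> (p + q) = evalA \<theta> p + evalA \<theta> q"
proof -
  have f1: "finite {w. Poly_Mapping.lookup p w * \<theta> w \<noteq> 0}"
    by (rule finite_subset[of _ "Poly_Mapping.keys p"]) (auto simp: lookup_not_eq_zero_eq_in_keys)
  have f2: "finite {w. Poly_Mapping.lookup q w * \<theta> w \<noteq> 0}"
    by (rule finite_subset[of _ "Poly_Mapping.keys q"]) (auto simp: lookup_not_eq_zero_eq_in_keys)
  show ?thesis unfolding evalA_def Poly_Mapping.lookup_add distrib_right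
    by (rule Sum_any.distrib[OF f1 f2])
qed

lemma evalA_single: "evalA \<theta> (Poly_Mapping.single w c) = c * \<theta> w"
  unfolding evalA_def Poly_Mapping.lookup_single by (simp add: when_mult)


abbreviation sgl :: "letter list \<Rightarrow> complex \<Rightarrow> nc" where
  "sgl \<equiv> Poly_Mapping.single"

lemma sgl_mult: "sgl u a * sgl v b = sgl (u @ v) (a * b)"
  by (simp add: mult_single plus_list_def)

lemma sgl_nil_1: "sgl [] 1 = 1"
  using single_one[where 'a="letter list" and 'b=complex] by (simp add: zero_list_def)

lemma lookup_scal: "Poly_Mapping.lookup (sgl [] c * q) w = c * Poly_Mapping.lookup q w"
proof -
  have "sgl [] c * q = Poly_Mapping.map ((*) c) q"
    using mult_map_scale_conv_mult[of c q] by (simp add: zero_list_def)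
  then show ?thesis by (simp add: Poly_Mapping.map.rep_eq when_def)
qed

lemma evalA_scal: "evalA \<theta> (sgl [] c * q) = c * evalA \<theta> q"
  unfolding evalA_def lookup_scal
  by (simp add: Sum_any_right_distrib mult.assoc)

lemma evalA_0[simp]: "evalA \<theta> 0 = 0"
  by (simp add: evalA_def)

lemma evalA_sum: "evalA \<theta> (sum f S) = (\<Sum>i\<in>S. evalA \<theta> (f i))"
  by (induction S rule: infinite_finite_induct) (auto simp: evalA_add)

lemma evalA_uminus: "evalA \<theta> (- p) = - evalA \<theta> p"
  using evalA_add[of \<theta> p "-p"] by (simp add: neg_eq_iff_add_eq_0[symmetric])

lemma evalA_diff: "evalA \<theta> (p - q) = evalA \<theta> p - evalA \<theta> q"
  using evalA_add[of \<theta> p "-q"] evalA_uminus[of \<theta> q] by simp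

lemma sgl_nil_comm: "sgl [] c * p = p * sgl [] c"
proof -
  have "Poly_Mapping.lookup (sgl [] c * p) w = Poly_Mapping.lookup (p * sgl [] c) w" for w
  proof -
    have "Poly_Mapping.lookup (p * sgl [] c) w = (\<Sum>l. Poly_Mapping.lookup p l *
        (\<Sum>q. Poly_Mapping.lookup (sgl [] c) q when w = l + q))"
      by (rule lookup_mult)
    also have "\<dots> = (\<Sum>l. Poly_Mapping.lookup p l * (c when w = l))"
    proof -
      have "(\<Sum>q. Poly_Mapping.lookup (sgl [] c) q when w = l + q) = (c when w = l)" for l
      proof -
        have eq: "(\<lambda>q. Poly_Mapping.lookup (sgl [] c) q when w = l + q) = (\<lambda>q. (c when w = l) when q = [])"
          by (auto simp: lookup_single when_def fun_eq_iff plus_list_def)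
        show ?thesis by (subst eq) (rule Sum_any_when_equal)
      qed
      then show ?thesis by simp
    qed
    also have "\<dots> = (\<Sum>l. (Poly_Mapping.lookup p l * c) when l = w)"
      by (rule Sum_any.cong) (auto simp: when_def)
    also have "\<dots> = c * Poly_Mapping.lookup p w" by simp
    finally show ?thesis by (simp add: lookup_scal)
  qed
  then show ?thesis by (simp add: poly_mapping_eqI)
qed

definition emb :: "letter \<Rightarrow> complex poly \<Rightarrow> nc" where
  "emb a p = (\<Sum>k\<le>degree p. sgl (replicate k a) (coeff p k))"

lemma emb_bound:
  assumes "degree p \<le> N"
  shows "emb a p = (\<Sum>k\<le>N. sgl (replicate k a) (coeff p k))"
  unfolding emb_def
  by (rule sum.mono_neutral_left) (use assms in \<open>auto simp: coeff_eq_0\<close>)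

lemma emb_pCons: "emb a (pCons c r) = sgl [] c + sgl [a] 1 * emb a r"
proof -
  let ?N = "degree r"
  have "emb a (pCons c r) = (\<Sum>k\<le>Suc ?N. sgl (replicate k a) (coeff (pCons c r) k))"
    by (rule emb_bound) (rule degree_pCons_le)
  also have "\<dots> = sgl [] c + (\<Sum>k\<le>?N. sgl (replicate (Suc k) a) (coeff r k))"
    by (subst sum.atMost_Suc_shift) simp
  also have "(\<Sum>k\<le>?N. sgl (replicate (Suc k) a) (coeff r k)) = sgl [a] 1 * emb a r"
    unfolding emb_def sum_distrib_left by (simp add: sgl_mult)
  finally show ?thesis .
qed

lemma emb_0[simp]: "emb a 0 = 0"
  by (simp add: emb_def)

lemma emb_const: "emb a [:c:] = sgl [] c"
  by (simp add: emb_pCons)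

lemma emb_1: "emb a 1 = 1"
  by (simp add: one_pCons emb_const sgl_nil_1 del: pCons_one)

lemma emb_X: "emb a [:0,1:] = sgl [a] 1"
  by (simp add: emb_pCons emb_const sgl_nil_1)

lemma emb_add: "emb a (p + q) = emb a p + emb a q"
proof (induction p arbitrary: q)
  case 0
  then show ?case by simp
next
  case (pCons c p)
  show ?case
  proof (cases q)
    case (pCons d q')
    then show ?thesis using pCons.IH
      by (simp add: emb_pCons single_add distrib_left)
  qed
qed

lemma emb_smult: "emb a (smult c p) = sgl [] c * emb a p"
proof (induction p)
  case 0
  then show ?case by simp
next
  case (pCons d p)
  have "sgl [] c * (sgl [a] 1 * emb a p) = sgl [a] 1 * (sgl [] c * emb a p)"
    by (simp add: mult.assoc[symmetric] sgl_mult)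
  then show ?case using pCons.IH
    by (simp add: emb_pCons distrib_left sgl_mult)
qed

lemma emb_mult: "emb a (p * q) = emb a p * emb a q"
proof (induction p)
  case 0
  then show ?case by simp
next
  case (pCons c p)
  have "emb a (pCons 0 (p * q)) = sgl [a] 1 * (emb a p * emb a q)"
    using pCons.IH by (simp add: emb_pCons)
  then show ?case
    by (simp add: emb_add emb_smult emb_pCons distrib_right mult.assoc)
qed

lemma emb_uminus: "emb a (- p) = - emb a p"
  using emb_add[of a p "-p"] by (simp add: neg_eq_iff_add_eq_0[symmetric])

lemma emb_diff: "emb a (p - q) = emb a p - emb a q"
  using emb_add[of a p "-q"] emb_uminus[of a q] by simp

definition prodL :: "(letter \<times> complex poly) list \<Rightarrow> nc" where
  "prodL us = prod_list (map (\<lambda>(a,p). emb a p) us)"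

lemma prodL_Nil[simp]: "prodL [] = 1" by (simp add: prodL_def)
lemma prodL_Cons: "prodL ((a,p) # us) = emb a p * prodL us" by (simp add: prodL_def)
lemma prodL_append: "prodL (us @ vs) = prodL us * prodL vs" by (simp add: prodL_def)

lemma ev_prod_evalA: "ev_prod \<theta> us w = evalA \<theta> (sgl w 1 * prodL us)"
proof (induction us arbitrary: w)
  case Nil
  then show ?case by (simp add: evalA_single)
next
  case (Cons u us)
  obtain a p where u: "u = (a, p)" by (cases u)
  have "sgl w 1 * emb a p * prodL us =
        (\<Sum>k\<le>degree p. sgl [] (coeff p k) * (sgl (w @ replicate k a) 1 * prodL us))"
    unfolding emb_def sum_distrib_left sum_distrib_right
    by (rule sum.cong) (auto simp: sgl_mult mult.assoc[symmetric])
  then show ?case using Cons.IH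
    by (simp add: u prodL_Cons mult.assoc evalA_sum evalA_scal)
qed

lemma ev_evalA: "ev \<theta> us = evalA \<theta> (prodL us)"
  unfolding ev_def ev_prod_evalA by (simp add: sgl_nil_1)

lemma evalA_emb: "evalA \<theta> (emb a p) = ev \<theta> [(a,p)]"
  by (simp add: ev_evalA prodL_Cons)


section \<open>c-freeness and multiplicativity\<close>

lemma ev1_smult: "ev \<theta> [(a, smult c p)] = c * ev \<theta> [(a, p)]"
  by (simp add: evalA_emb[symmetric] emb_smult evalA_scal)

lemma ev1_add: "ev \<theta> [(a, p + q)] = ev \<theta> [(a, p)] + ev \<theta> [(a, q)]"
  by (simp add: evalA_emb[symmetric] emb_add evalA_add)

lemma alternating_Nil[simp]: "alternating []"
  by (simp add: alternating_def)

lemma alternating_snoc: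
  "alternating (xs @ [y]) \<longleftrightarrow> alternating xs \<and> (xs \<noteq> [] \<longrightarrow> fst (last xs) \<noteq> fst y)"
proof
  assume a: "alternating (xs @ [y])"
  have "alternating xs"
    unfolding alternating_def
  proof (intro allI impI)
    fix i assume "Suc i < length xs"
    with a[unfolded alternating_def, rule_format, of i] show "fst (xs ! i) \<noteq> fst (xs ! Suc i)"
      by (simp add: nth_append)
  qed
  moreover have "xs \<noteq> [] \<longrightarrow> fst (last xs) \<noteq> fst y"
  proof
    assume "xs \<noteq> []"
    then have "Suc (length xs - 1) < length (xs @ [y])" by simp
    from a[unfolded alternating_def, rule_format, OF this] \<open>xs \<noteq> []\<close>
    show "fst (last xs) \<noteq> fst y"
      by (simp add: nth_append last_conv_nth)
  qed
  ultimately show "alternating xs \<and> (xs \<noteq> [] \<longrightarrow> fst (last xs) \<noteq> fst y)" ..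
next
  assume b: "alternating xs \<and> (xs \<noteq> [] \<longrightarrow> fst (last xs) \<noteq> fst y)"
  show "alternating (xs @ [y])"
    unfolding alternating_def
  proof (intro allI impI)
    fix i assume i: "Suc i < length (xs @ [y])"
    show "fst ((xs @ [y]) ! i) \<noteq> fst ((xs @ [y]) ! Suc i)"
    proof (cases "Suc i < length xs")
      case True
      then show ?thesis using b by (simp add: nth_append alternating_def)
    next
      case False
      with i have si: "Suc i = length xs" by simp
      then have ne: "xs \<noteq> []" by auto
      then have "last xs = xs ! i" using si[symmetric] by (simp add: last_conv_nth)
      with ne have "xs \<noteq> []" "last xs = xs ! i" by auto
      then show ?thesis using b si
        by (auto simp: nth_append)
    qed
  qed
qed

lemma cfree_unital: "c_free \<phi> \<psi> \<Longrightarrow> \<phi> [] = 1 \<and> \<psi> [] = 1"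
  unfolding c_free_def unital_def by blast

lemma cfree_prodL:
  assumes "c_free \<phi> \<psi>" "us \<noteq> []" "alternating us" "\<forall>u\<in>set us. ev \<psi> [u] = 0"
  shows "evalA \<psi> (prodL us) = 0 \<and> evalA \<phi> (prodL us) = (\<Prod>u\<leftarrow>us. ev \<phi> [u])"
proof -
  have "ev \<psi> us = 0 \<and> ev \<phi> us = (\<Prod>u\<leftarrow>us. ev \<phi> [u])"
    using assms(1) unfolding c_free_def using assms(2-4) by blast
  then show ?thesis by (simp only: ev_evalA)
qed

inductive alt0 :: "functional \<Rightarrow> letter \<Rightarrow> nc \<Rightarrow> bool" for \<psi> where
  alt0_const: "alt0 \<psi> L (sgl [] c)"
| alt0_add: "alt0 \<psi> L p \<Longrightarrow> alt0 \<psi> L q \<Longrightarrow> alt0 \<psi> L (p + q)"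
| alt0_cons: "ev \<psi> [(L,u)] = 0 \<Longrightarrow> alt0 \<psi> L' w \<Longrightarrow> L' \<noteq> L \<Longrightarrow> alt0 \<psi> L (emb L u * w)"

lemma alt0_zero: "alt0 \<psi> L 0"
  using alt0_const[where \<psi>=\<psi> and L=L and c=0] by simp

lemma alt0_one: "alt0 \<psi> L 1"
  using alt0_const[where \<psi>=\<psi> and L=L and c=1] by (simp add: sgl_nil_1)

lemma alt0_scal: "alt0 \<psi> L w \<Longrightarrow> alt0 \<psi> L (sgl [] c * w)"
proof (induction rule: alt0.induct)
  case (alt0_const L d)
  then show ?case using alt0.alt0_const[where \<psi>=\<psi> and L=L and c="c*d"] by (simp add: sgl_mult)
next
  case (alt0_add L p q)
  then show ?case by (simp add: distrib_left alt0.alt0_add)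
next
  case (alt0_cons L u L' w)
  have "sgl [] c * (emb L u * w) = emb L (smult c u) * w"
    by (simp add: emb_smult mult.assoc)
  moreover have "ev \<psi> [(L, smult c u)] = 0" using alt0_cons by (simp add: ev1_smult)
  ultimately show ?case using alt0.alt0_cons alt0_cons by metis
qed

lemma alt0_sum: "(\<And>i. i \<in> S \<Longrightarrow> alt0 \<psi> L (f i)) \<Longrightarrow> alt0 \<psi> L (sum f S)"
  by (induction S rule: infinite_finite_induct) (auto intro: alt0_add alt0_zero)

lemma alt0_emb: "ev \<psi> [(L,u)] = 0 \<Longrightarrow> L' \<noteq> L \<Longrightarrow> alt0 \<psi> L (emb L u)"
  using alt0_cons[OF _ alt0_one, where L=L and u=u and L'=L'] by simp

lemma alt0_mult_main:
  assumes cf: "c_free \<phi> \<psi>"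
  shows "alt0 \<psi> L w \<Longrightarrow> alternating vs \<Longrightarrow> (\<forall>u\<in>set vs. ev \<psi> [u] = 0) \<Longrightarrow>
    (vs \<noteq> [] \<longrightarrow> fst (last vs) \<noteq> L) \<Longrightarrow>
    evalA \<phi> (prodL vs * w) = (\<Prod>u\<leftarrow>vs. ev \<phi> [u]) * evalA \<phi> w \<and>
    (vs \<noteq> [] \<longrightarrow> evalA \<psi> (prodL vs * w) = 0)"
proof (induction arbitrary: vs rule: alt0.induct)
  case (alt0_const L c)
  have u: "\<phi> [] = 1" "\<psi> [] = 1" using cfree_unital[OF cf] by auto
  have e1: "evalA \<phi> (prodL vs) = (\<Prod>u\<leftarrow>vs. ev \<phi> [u])"
  proof (cases "vs = []")
    case True
    then show ?thesis using u by (simp add: sgl_nil_1[symmetric] evalA_single)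
  next
    case False
    then show ?thesis using cfree_prodL[OF cf False alt0_const(1,2)] by simp
  qed
  have e2: "vs \<noteq> [] \<longrightarrow> evalA \<psi> (prodL vs) = 0"
    using cfree_prodL[OF cf _ alt0_const(1,2)] by simp
  show ?case
    using e1 e2 u by (simp add: sgl_nil_comm[symmetric] evalA_scal evalA_single)
next
  case (alt0_add L p q)
  then show ?case by (simp add: distrib_left evalA_add)
next
  case (alt0_cons L u L' w)
  let ?vs = "vs @ [(L,u)]"
  have a1: "alternating ?vs" using alt0_cons.prems alternating_snoc by simp
  have IH: "evalA \<phi> (prodL ?vs * w) = (\<Prod>u\<leftarrow>?vs. ev \<phi> [u]) * evalA \<phi> w \<and>
    evalA \<psi> (prodL ?vs * w) = 0"
    using alt0_cons.IH[of ?vs] a1 alt0_cons.prems alt0_cons.hyps by auto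
  have IH1: "evalA \<phi> (emb L u * w) = ev \<phi> [(L,u)] * evalA \<phi> w"
    using alt0_cons.IH[of "[(L,u)]"] alt0_cons.hyps by (simp add: alternating_def prodL_Cons)
  have eq: "prodL vs * (emb L u * w) = prodL ?vs * w"
    by (simp add: prodL_append prodL_Cons mult.assoc)
  show ?case using IH IH1 unfolding eq by (simp add: mult.assoc)
qed

lemma alt0_mult:
  assumes "c_free \<phi> \<psi>" "alt0 \<psi> L w" "L' \<noteq> L" "ev \<psi> [(L',u)] = 0"
  shows "evalA \<phi> (emb L' u * w) = ev \<phi> [(L',u)] * evalA \<phi> w"
  using alt0_mult_main[OF assms(1,2), of "[(L',u)]"] assms(3,4)
  by (simp add: alternating_def prodL_Cons)


lemma cfree_self: assumes "c_free \<phi> \<psi>" shows "c_free \<psi> \<psi>"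
proof -
  have u: "unital \<psi>" using assms unfolding c_free_def by blast
  have "ev \<psi> us = 0 \<and> ev \<psi> us = (\<Prod>u\<leftarrow>us. ev \<psi> [u])"
    if h: "us \<noteq> [] \<and> alternating us \<and> (\<forall>u\<in>set us. ev \<psi> [u] = 0)" for us
  proof -
    have "ev \<psi> us = 0" using assms h unfolding c_free_def by blast
    moreover from h obtain v vs where "us = v # vs" by (cases us) auto
    moreover have "ev \<psi> [v] = 0" using h \<open>us = v # vs\<close> by simp
    ultimately show ?thesis by simp
  qed
  then show ?thesis using u unfolding c_free_def by blast
qed


section \<open>Boolean polynomials\<close>

declare bool_cum.simps[simp del]

lemma bool_cum_0[simp]: "bool_cum m 0 = 0"
  by (subst bool_cum.simps) simp

lemma bool_cum_pos: "n \<noteq> 0 \<Longrightarrow> bool_cum m n = m n - (\<Sum>k\<in>{1..<n}. bool_cum m k * m (n - k))"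
  by (subst bool_cum.simps) simp

fun bp :: "(nat \<Rightarrow> complex) \<Rightarrow> nat \<Rightarrow> complex poly" where
  "bp \<beta> 0 = 1"
| "bp \<beta> (Suc j) = [:0,1:] * bp \<beta> j - [:\<beta> (Suc j):]"

lemma bp_closed: "bp \<beta> j = [:0,1:]^j - (\<Sum>i\<in>{1..j}. smult (\<beta> i) ([:0,1:]^(j-i)))"
proof (induction j)
  case 0
  then show ?case by simp
next
  case (Suc j)
  have "[:0,1:] * (\<Sum>i\<in>{1..j}. smult (\<beta> i) ([:0,1:]^(j-i))) =
        (\<Sum>i\<in>{1..j}. smult (\<beta> i) ([:0,1:]^(Suc j-i)))"
    unfolding sum_distrib_left
    by (rule sum.cong) (auto simp: mult_smult_right Suc_diff_le)
  moreover have "(\<Sum>i\<in>{1..Suc j}. smult (\<beta> i) ([:0,1:]^(Suc j-i))) =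
      (\<Sum>i\<in>{1..j}. smult (\<beta> i) ([:0,1:]^(Suc j-i))) + [:\<beta> (Suc j):]"
    by simp
  ultimately show ?case using Suc.IH by (simp add: right_diff_distrib)
qed

lemma emb_sum: "emb a (sum f S) = (\<Sum>i\<in>S. emb a (f i))"
  by (induction S rule: infinite_finite_induct) (auto simp: emb_add)

lemma ev1_sum: "ev \<theta> [(a, sum f S)] = (\<Sum>i\<in>S. ev \<theta> [(a, f i)])"
  by (simp add: evalA_emb[symmetric] emb_sum evalA_sum)

lemma ev1_diff: "ev \<theta> [(a, p - q)] = ev \<theta> [(a, p)] - ev \<theta> [(a, q)]"
  by (simp add: evalA_emb[symmetric] emb_diff evalA_diff)

lemma emb_xpow: "emb a ([:0,1:]^k) = sgl (replicate k a) 1"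
proof (induction k)
  case 0
  then show ?case by (simp add: emb_1 sgl_nil_1)
next
  case (Suc k)
  have "emb a ([:0,1:]^Suc k) = emb a [:0,1:] * emb a ([:0,1:]^k)"
    by (simp only: power_Suc emb_mult)
  then show ?case using Suc.IH by (simp add: emb_X sgl_mult)
qed

lemma ev1_xpow: "ev \<theta> [(a, [:0,1:]^k)] = \<theta> (replicate k a)"
  by (simp add: evalA_emb[symmetric] emb_xpow evalA_single)

lemma ev1_const: "ev \<theta> [(a, [:c:])] = c * \<theta> []"
  by (simp add: evalA_emb[symmetric] emb_const evalA_single)

lemma ev_bp: "ev \<theta> [(a, bp \<beta> j)] =
    \<theta> (replicate j a) - (\<Sum>i\<in>{1..j}. \<beta> i * \<theta> (replicate (j - i) a))"
  by (simp add: bp_closed ev1_diff ev1_sum ev1_smult ev1_xpow)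

lemma bp_centered:
  assumes "\<psi> [] = 1" "j \<noteq> 0"
  shows "ev \<psi> [(a, bp (bool_cum (\<lambda>k. \<psi> (replicate k a))) j)] = 0"
proof -
  let ?m = "\<lambda>k. \<psi> (replicate k a)"
  have "(\<Sum>i\<in>{1..j}. bool_cum ?m i * ?m (j - i)) =
        (\<Sum>i\<in>{1..<j}. bool_cum ?m i * ?m (j - i)) + bool_cum ?m j"
  proof -
    have "{1..j} = insert j {1..<j}" using assms(2) by auto
    then show ?thesis using assms(1) by (simp add: add.commute)
  qed
  then show ?thesis
    using bool_cum_pos[OF assms(2), of ?m] by (simp add: ev_bp)
qed

section \<open>Series with polynomial coefficients\<close>

type_synonym pf = "complex poly fps"

lemma pconst_add: "[:a + b:] = [:a:] + [:b:]"
  by simp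

lemma pconst_sum: "[:sum f S:] = (\<Sum>i\<in>S. [:f i:])"
proof (induction S rule: infinite_finite_induct)
  case (insert x F)
  then show ?case by (simp only: sum.insert[OF insert(1,2)] pconst_add)
qed auto

lemma pconst_mult: "[:a:] * [:b:] = [:a * b:]"
  by (simp add: mult.commute)

definition cp :: "complex fps \<Rightarrow> pf" where
  "cp f = Abs_fps (\<lambda>n. [:fps_nth f n:])"

lemma cp_nth[simp]: "cp f $ n = [:fps_nth f n:]"
  by (simp add: cp_def)

lemma cp_add: "cp (f + g) = cp f + cp g"
  by (rule fps_ext) simp

lemma cp_diff: "cp (f - g) = cp f - cp g"
  by (rule fps_ext) simp

lemma cp_mult: "cp (f * g) = cp f * cp g"
  by (rule fps_ext) (simp add: fps_mult_nth pconst_sum mult.commute)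

lemma cp_one: "cp 1 = 1"
  by (rule fps_ext) (simp add: one_pCons)

lemma cp_X: "cp fps_X = fps_X"
  by (rule fps_ext) (simp add: fps_X_def one_pCons)

lemma cp_power: "cp (f ^ k) = cp f ^ k"
  by (induction k) (simp_all add: cp_one cp_mult)

lemma cp_compose: "cp (f oo g) = cp f oo cp g"
  by (rule fps_ext) (simp add: fps_compose_nth cp_power[symmetric] pconst_sum mult.commute)

definition Vs :: "(nat \<Rightarrow> complex) \<Rightarrow> pf" where
  "Vs \<beta> = Abs_fps (\<lambda>n. bp \<beta> (Suc n))"

definition Xp :: pf where "Xp = fps_const [:0,1:]"

definition ett :: "(nat \<Rightarrow> complex) \<Rightarrow> complex fps" where
  "ett \<beta> = Abs_fps (\<lambda>n. \<beta> (Suc n))"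

lemma IdV: "fps_X * Xp * Vs \<beta> = Vs \<beta> - Xp + cp (ett \<beta>)"
proof (rule fps_ext)
  fix n
  show "(fps_X * Xp * Vs \<beta>) $ n = (Vs \<beta> - Xp + cp (ett \<beta>)) $ n"
  proof (cases n)
    case 0
    then show ?thesis by (simp add: mult.assoc Xp_def Vs_def ett_def)
  next
    case (Suc m)
    then show ?thesis by (simp add: mult.assoc Xp_def Vs_def ett_def)
  qed
qed

lemma IdVc:
  assumes w0: "w $ 0 = 0"
  shows "cp w * Xp * (Vs \<beta> oo cp w) = (Vs \<beta> oo cp w) - Xp + cp (ett \<beta> oo w)"
proof -
  have c0: "cp w $ 0 = 0" using w0 by simp
  have "(fps_X * Xp * Vs \<beta>) oo cp w = (Vs \<beta> - Xp + cp (ett \<beta>)) oo cp w"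
    by (simp only: IdV)
  then show ?thesis
    by (simp add: fps_compose_mult_distrib[OF c0] fps_compose_add_distrib
        fps_compose_sub_distrib Xp_def c0 cp_compose fps_X_fps_compose_startby0[OF c0])
qed

definition evS :: "functional \<Rightarrow> letter \<Rightarrow> pf \<Rightarrow> complex fps" where
  "evS \<theta> a F = Abs_fps (\<lambda>n. ev \<theta> [(a, F $ n)])"

lemma mult_pconst_right: "p * [:c:] = smult c p"
  by (simp add: mult.commute)

lemma evS_compose: "evS \<theta> a (F oo cp w) = evS \<theta> a F oo w"
proof (rule fps_ext)
  fix n
  have eq: "(F oo cp w) $ n = (\<Sum>i=0..n. smult ((w ^ i) $ n) (F $ i))"
    by (simp add: fps_compose_nth cp_power[symmetric] mult_pconst_right)
  have "evS \<theta> a (F oo cp w) $ n = ev \<theta> [(a, (\<Sum>i=0..n. smult ((w ^ i) $ n) (F $ i)))]"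
    by (simp only: evS_def fps_nth_Abs_fps eq)
  also have "\<dots> = (\<Sum>i=0..n. (w ^ i) $ n * ev \<theta> [(a, F $ i)])"
    by (simp add: ev1_sum ev1_smult)
  also have "\<dots> = (evS \<theta> a F oo w) $ n"
    by (simp add: evS_def fps_compose_nth mult.commute)
  finally show "evS \<theta> a (F oo cp w) $ n = (evS \<theta> a F oo w) $ n" .
qed


section \<open>Series with noncommutative coefficients\<close>

type_synonym ns = "nc fps"

definition embS :: "letter \<Rightarrow> pf \<Rightarrow> ns" where
  "embS a F = Abs_fps (\<lambda>n. emb a (F $ n))"

lemma embS_nth[simp]: "embS a F $ n = emb a (F $ n)"
  by (simp add: embS_def)

lemma embS_add: "embS a (F + G) = embS a F + embS a G"
  by (rule fps_ext) (simp add: emb_add)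

lemma embS_diff: "embS a (F - G) = embS a F - embS a G"
  by (rule fps_ext) (simp add: emb_diff)

lemma embS_mult: "embS a (F * G) = embS a F * embS a G"
  by (rule fps_ext) (simp add: fps_mult_nth emb_sum emb_mult)

lemma embS_one: "embS a 1 = 1"
  by (rule fps_ext) (simp add: emb_1)

lemma embS_X: "embS a fps_X = fps_X"
  by (rule fps_ext) (simp add: emb_1 fps_X_def)

lemma embS_const: "embS a (fps_const p) = fps_const (emb a p)"
  by (rule fps_ext) simp

definition sc :: "complex fps \<Rightarrow> ns" where
  "sc f = Abs_fps (\<lambda>n. sgl [] (f $ n))"

lemma sc_nth[simp]: "sc f $ n = sgl [] (f $ n)"
  by (simp add: sc_def)

lemma embS_cp: "embS a (cp f) = sc f"
  by (rule fps_ext) (simp add: emb_const)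

lemma sc_mult: "sc (f * g) = sc f * sc g"
  by (metis embS_cp embS_mult cp_mult)

lemma sc_add: "sc (f + g) = sc f + sc g"
  by (metis embS_cp embS_add cp_add)

lemma sc_diff: "sc (f - g) = sc f - sc g"
  by (metis embS_cp embS_diff cp_diff)

lemma sc_one: "sc 1 = 1"
  by (metis embS_cp embS_one cp_one)

lemma sc_X: "sc fps_X = fps_X"
  by (metis embS_cp embS_X cp_X)

lemma sc_comm: "sc f * F = F * sc f"
proof (rule fps_ext)
  fix n
  have "(sc f * F) $ n = (\<Sum>i=0..n. sgl [] (f $ i) * F $ (n - i))"
    by (simp add: fps_mult_nth)
  also have "\<dots> = (\<Sum>i=0..n. sgl [] (f $ (n - i)) * F $ (n - (n - i)))"
    by (subst sum.atLeastAtMost_rev) simp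
  also have "\<dots> = (\<Sum>i=0..n. F $ i * sgl [] (f $ (n - i)))"
    by (rule sum.cong) (auto simp: sgl_nil_comm)
  also have "\<dots> = (F * sc f) $ n"
    by (simp add: fps_mult_nth)
  finally show "(sc f * F) $ n = (F * sc f) $ n" .
qed

lemma X_comm: "fps_X * (F :: ns) = F * fps_X"
  by (rule fps_mult_fps_X_commute)

definition evalS :: "functional \<Rightarrow> ns \<Rightarrow> complex fps" where
  "evalS \<theta> F = Abs_fps (\<lambda>n. evalA \<theta> (F $ n))"

lemma evalS_add: "evalS \<theta> (F + G) = evalS \<theta> F + evalS \<theta> G"
  by (rule fps_ext) (simp add: evalS_def evalA_add)

lemma evalS_diff: "evalS \<theta> (F - G) = evalS \<theta> F - evalS \<theta> G"
  by (rule fps_ext) (simp add: evalS_def evalA_diff)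

lemma evalS_sc: "evalS \<theta> (sc f * F) = f * evalS \<theta> F"
  by (rule fps_ext) (simp add: evalS_def fps_mult_nth evalA_sum evalA_scal)

lemma evalS_X: "evalS \<theta> (fps_X * F) = fps_X * evalS \<theta> F"
  by (rule fps_ext) (simp add: evalS_def)

lemma evalS_one: "\<theta> [] = 1 \<Longrightarrow> evalS \<theta> 1 = 1"
  by (rule fps_ext) (simp add: evalS_def sgl_nil_1[symmetric] evalA_single del: single_one)

lemma evalS_embS: "evalS \<theta> (embS a F) = evS \<theta> a F"
  by (rule fps_ext) (simp add: evalS_def evS_def evalA_emb)

definition alt0S :: "functional \<Rightarrow> letter \<Rightarrow> ns \<Rightarrow> bool" where
  "alt0S \<psi> L F \<longleftrightarrow> (\<forall>n. alt0 \<psi> L (F $ n))"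

definition centS :: "functional \<Rightarrow> letter \<Rightarrow> pf \<Rightarrow> bool" where
  "centS \<psi> a V \<longleftrightarrow> (\<forall>n. ev \<psi> [(a, V $ n)] = 0)"

lemma evalS_mult_alt:
  assumes "c_free \<phi> \<psi>" "centS \<psi> L' V" "alt0S \<psi> L W" "L' \<noteq> L"
  shows "evalS \<phi> (embS L' V * W) = evS \<phi> L' V * evalS \<phi> W"
proof (rule fps_ext)
  fix n
  have "evalA \<phi> (emb L' (V $ i) * W $ (n - i)) = ev \<phi> [(L', V $ i)] * evalA \<phi> (W $ (n - i))" for i
    using alt0_mult[OF assms(1), of L "W $ (n - i)" L' "V $ i"] assms(2-4)
    by (simp add: alt0S_def centS_def)
  then show "evalS \<phi> (embS L' V * W) $ n = (evS \<phi> L' V * evalS \<phi> W) $ n"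
    by (simp add: evalS_def evS_def fps_mult_nth evalA_sum)
qed

lemma alt0S_mult:
  assumes "centS \<psi> L' V" "alt0S \<psi> L W" "L \<noteq> L'"
  shows "alt0S \<psi> L' (embS L' V * W)"
  unfolding alt0S_def
proof
  fix n
  show "alt0 \<psi> L' ((embS L' V * W) $ n)"
    unfolding fps_mult_nth embS_nth
    by (rule alt0_sum) (use assms in \<open>auto simp: alt0S_def centS_def intro: alt0_cons\<close>)
qed

lemma alt0S_add: "alt0S \<psi> L F \<Longrightarrow> alt0S \<psi> L G \<Longrightarrow> alt0S \<psi> L (F + G)"
  by (simp add: alt0S_def alt0_add)

lemma alt0S_sc: "alt0S \<psi> L F \<Longrightarrow> alt0S \<psi> L (sc f * F)"
  unfolding alt0S_def fps_mult_nth sc_nth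
  by (auto intro!: alt0_sum alt0_scal)

lemma alt0S_X: "alt0S \<psi> L F \<Longrightarrow> alt0S \<psi> L (fps_X * F)"
  by (simp add: alt0S_def alt0_zero)

lemma alt0S_one: "alt0S \<psi> L 1"
  unfolding alt0S_def
proof
  fix n show "alt0 \<psi> L ((1::ns) $ n)"
    by (cases "n = 0") (simp_all add: alt0_one alt0_zero)
qed

lemma alt0S_embS: "centS \<psi> L V \<Longrightarrow> L \<noteq> L' \<Longrightarrow> alt0S \<psi> L (embS L V)"
  using alt0S_mult[OF _ alt0S_one, of \<psi> L V L'] by simp

lemma power_order:
  fixes C :: "'a::ring_1 fps"
  assumes "C $ 0 = 0"
  shows "j < m \<Longrightarrow> (C ^ m) $ j = 0"
proof (induction m arbitrary: j)
  case 0 then show ?case by simp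
next
  case (Suc m)
  have "(C ^ Suc m) $ j = (\<Sum>i=0..j. C $ i * (C ^ m) $ (j - i))"
    by (simp add: fps_mult_nth)
  also have "\<dots> = 0"
  proof (rule sum.neutral, intro ballI)
    fix i assume ij: "i \<in> {0..j}"
    show "C $ i * (C ^ m) $ (j - i) = 0"
    proof (cases "i = 0")
      case True then show ?thesis using assms by simp
    next
      case False
      then have "j - i < m" using Suc.prems ij by auto
      then show ?thesis using Suc.IH by simp
    qed
  qed
  finally show ?case .
qed

lemma fixpoint_exists:
  fixes B C :: "'a::ring_1 fps"
  assumes C0: "C $ 0 = 0"
  shows "\<exists>K. K = B + C * K"
proof -
  define P where "P N = (\<Sum>m\<le>N. C ^ m * B)" for N
  have ord: "(C ^ m * B) $ j = 0" if "j < m" for j m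
    unfolding fps_mult_nth by (rule sum.neutral) (use that power_order[OF C0] in auto)
  have stab: "P N $ n = P n $ n" if "n \<le> N" for N n
  proof -
    have "P N = P n + (\<Sum>m\<in>{Suc n..N}. C ^ m * B)"
    proof -
      have "{..N} = {..n} \<union> {Suc n..N}" using that by auto
      then show ?thesis unfolding P_def by (subst sum.union_disjoint[symmetric]) auto
    qed
    moreover have "(\<Sum>m\<in>{Suc n..N}. C ^ m * B) $ n = 0"
      by (simp add: fps_sum_nth ord)
    ultimately show ?thesis by simp
  qed
  have Psuc: "P (Suc N) = B + C * P N" for N
    unfolding P_def
    by (subst sum.atMost_Suc_shift) (simp add: sum_distrib_left mult.assoc)
  define K where "K = Abs_fps (\<lambda>n. P n $ n)"
  have "K $ n = (B + C * K) $ n" for n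
  proof -
    have "(C * K) $ n = (\<Sum>i=0..n. C $ i * P (n - i) $ (n - i))"
      by (simp add: fps_mult_nth K_def)
    also have "\<dots> = (\<Sum>i=0..n. C $ i * P n $ (n - i))"
    proof (rule sum.cong)
      fix i assume "i \<in> {0..n}"
      then show "C $ i * P (n - i) $ (n - i) = C $ i * P n $ (n - i)"
        using stab[of "n - i" n] by simp
    qed simp
    also have "\<dots> = (C * P n) $ n" by (simp add: fps_mult_nth)
    finally have "(B + C * K) $ n = P (Suc n) $ n" by (simp add: Psuc)
    also have "\<dots> = P n $ n" by (rule stab) simp
    finally show ?thesis by (simp add: K_def)
  qed
  then show ?thesis by (intro exI[of _ K] fps_ext) simp
qed


lemma Q_alg:
  fixes X Y VX VY K z sa sb swX swY sL :: "'a::ring_1"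
  assumes ca: "\<And>F. sa * F = F * sa" and cb: "\<And>F. sb * F = F * sb"
    and cwX: "\<And>F. swX * F = F * swX" and cwY: "\<And>F. swY * F = F * swY"
    and cL: "\<And>F. sL * F = F * sL" and cz: "\<And>F. z * F = F * z"
    and hX: "swX * X * VX = VX - X + sb" and hY: "swY * Y * VY = VY - Y + sa"
    and hwX: "swX = z * sa" and hwY: "swY = z * sb"
    and hL: "sL * (1 - z * sa * sb) = 1"
    and hK: "K = 1 + swX * VX + z * VX * VY * K"
  shows "sL * (1 + swY * VY) * K = 1 + z * (X * Y) * (sL * (1 + swY * VY) * K)"
proof -
  have s1: "Y * (1 + swY * VY) = VY + sa"
  proof -
    have "Y * (1 + swY * VY) = Y + (Y * swY) * VY" by (simp add: distrib_left mult.assoc)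
    also have "Y * swY = swY * Y" by (rule cwY[symmetric])
    finally show ?thesis using hY by simp
  qed
  have s2: "X * ((VY + sa) * K) = sa * VX + sa * sb + VX * VY * K + sb * VY * K"
  proof -
    have i: "X * K = X + (X * swX) * VX + (X * z) * (VX * VY * K)"
      by (subst hK) (simp add: distrib_left mult.assoc)
    have ii: "sa * ((X * swX) * VX) = sa * (VX - X + sb)"
      by (simp add: cwX[of X, symmetric] hX mult.assoc[symmetric])
    have iii: "sa * ((X * z) * (VX * VY * K)) = (VX - X + sb) * (VY * K)"
    proof -
      have e: "sa * (z * W) = z * (sa * W)" for W
        by (simp add: mult.assoc[symmetric] ca[of z])
      have "sa * ((X * z) * (VX * VY * K)) = (z * sa) * X * VX * (VY * K)"
        by (simp add: cz[of X, symmetric] mult.assoc e)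
      also have "\<dots> = swX * X * VX * (VY * K)" by (simp add: hwX)
      also have "\<dots> = (VX - X + sb) * (VY * K)" by (simp add: hX)
      finally show ?thesis .
    qed
    have "X * ((VY + sa) * K) = X * VY * K + (X * sa) * K"
      by (simp add: distrib_left distrib_right mult.assoc)
    also have "(X * sa) * K = sa * (X * K)" by (simp only: ca[of X, symmetric] mult.assoc)
    also have "sa * (X * K) = sa * X + sa * ((X * swX) * VX) + sa * ((X * z) * (VX * VY * K))"
      by (simp add: i distrib_left)
    also have "\<dots> = sa * X + sa * (VX - X + sb) + (VX - X + sb) * (VY * K)"
      by (simp only: ii iii)
    finally show ?thesis
      by (simp add: algebra_simps)
  qed
  let ?Q = "sL * (1 + swY * VY) * K"
  have s3: "z * (X * Y) * ?Q = sL * (swX * VX + z * sa * sb + z * VX * VY * K + swY * VY * K)"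
  proof -
    have eL: "W1 * (sL * W) = sL * (W1 * W)" for W1 W
      by (simp add: mult.assoc[symmetric] cL[of W1])
    have "z * (X * Y) * ?Q = sL * (z * (X * ((Y * (1 + swY * VY)) * K)))"
      by (simp only: mult.assoc eL)
    also have "\<dots> = sL * (z * (sa * VX + sa * sb + VX * VY * K + sb * VY * K))"
      by (simp only: s1 s2)
    also have "z * (sa * VX + sa * sb + VX * VY * K + sb * VY * K) =
        swX * VX + z * sa * sb + z * VX * VY * K + swY * VY * K"
      by (simp add: hwX hwY distrib_left mult.assoc)
    finally show ?thesis .
  qed
  have "?Q - z * (X * Y) * ?Q = sL * (K - swX * VX - z * VX * VY * K - z * sa * sb)"
    unfolding s3 by (simp add: algebra_simps)
  also have "K - swX * VX - z * VX * VY * K - z * sa * sb = 1 - z * sa * sb"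
    using hK by (simp add: algebra_simps)
  finally have "?Q - z * (X * Y) * ?Q = 1" using hL by simp
  then show ?thesis by (simp only: diff_eq_eq)
qed


lemma bool_cum_cong:
  assumes "\<And>k. 0 < k \<Longrightarrow> m k = m' k"
  shows "bool_cum m n = bool_cum m' n"
proof (induction n rule: less_induct)
  case (less n)
  show ?case
  proof (cases "n = 0")
    case True then show ?thesis by simp
  next
    case False
    have "(\<Sum>k\<in>{1..<n}. bool_cum m k * m (n - k)) = (\<Sum>k\<in>{1..<n}. bool_cum m' k * m' (n - k))"
      by (rule sum.cong) (auto simp: less.IH assms)
    then show ?thesis using False assms by (simp add: bool_cum_pos)
  qed
qed

lemma bool_rec:
  assumes m0: "m 0 = 1"
  shows "Abs_fps m * (1 - Abs_fps (bool_cum m)) = 1"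
proof (rule fps_ext)
  fix n
  have AB: "(Abs_fps m * Abs_fps (bool_cum m)) $ n = (\<Sum>k=0..n. bool_cum m k * m (n - k))"
    by (subst mult.commute) (simp add: fps_mult_nth)
  show "(Abs_fps m * (1 - Abs_fps (bool_cum m))) $ n = (1 :: complex fps) $ n"
  proof (cases "n = 0")
    case True then show ?thesis using m0 by (simp add: right_diff_distrib)
  next
    case False
    have "{0..n} = insert 0 (insert n {1..<n})" using False by auto
    then have "(\<Sum>k=0..n. bool_cum m k * m (n - k)) =
        bool_cum m n + (\<Sum>k\<in>{1..<n}. bool_cum m k * m (n - k))"
      using False m0 by simp
    also have "\<dots> = m n" using bool_cum_pos[OF False, of m] by simp
    finally show ?thesis using False AB by (simp add: right_diff_distrib)
  qed
qed

lemma boolM: "moment_fps \<theta> T * (1 - eta \<theta> T) = 1"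
proof -
  let ?m = "\<lambda>n. if n = 0 then 1 else \<theta> (T n)"
  have "eta \<theta> T = Abs_fps (bool_cum ?m)"
    unfolding eta_def by (rule arg_cong[where f=Abs_fps], rule ext, rule bool_cum_cong) simp
  then show ?thesis unfolding moment_fps_def by (simp add: bool_rec)
qed

lemma eta_X: "eta \<theta> T = fps_X * eta_tilde \<theta> T"
  by (rule fps_ext) (simp add: eta_def eta_tilde_def)

lemma eta_tilde_ett: "eta_tilde \<theta> T = ett (bool_cum (\<lambda>k. \<theta> (T k)))"
  by (rule fps_ext) (simp add: eta_def eta_tilde_def ett_def)

lemma moment_rep: "\<theta> [] = 1 \<Longrightarrow> moment_fps \<theta> (\<lambda>n. replicate n a) = Abs_fps (\<lambda>n. \<theta> (replicate n a))"
  by (rule fps_ext) (simp add: moment_fps_def)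

lemma Mpsi:
  assumes t0: "\<theta> [] = 1"
  shows "Abs_fps (\<lambda>n. \<theta> (replicate n a)) * (1 - fps_X * ett \<beta>) = 1 + fps_X * evS \<theta> a (Vs \<beta>)"
proof (rule fps_ext)
  fix n
  have E: "(Abs_fps (\<lambda>n. \<theta> (replicate n a)) * (fps_X * ett \<beta>)) $ n =
      (\<Sum>k=0..n. (fps_X * ett \<beta>) $ k * \<theta> (replicate (n - k) a))"
    by (subst mult.commute) (simp add: fps_mult_nth)
  show "(Abs_fps (\<lambda>n. \<theta> (replicate n a)) * (1 - fps_X * ett \<beta>)) $ n =
        (1 + fps_X * evS \<theta> a (Vs \<beta>)) $ n"
  proof (cases "n = 0")
    case True then show ?thesis using t0 by (simp add: right_diff_distrib)
  next
    case False
    have "{0..n} = insert 0 {1..n}" by auto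
    then have "(\<Sum>k=0..n. (fps_X * ett \<beta>) $ k * \<theta> (replicate (n - k) a)) =
        (\<Sum>k\<in>{1..n}. \<beta> k * \<theta> (replicate (n - k) a))"
      by (simp add: ett_def)
    moreover obtain m where nm: "n = Suc m" using False by (cases n) auto
    ultimately show ?thesis using False E
      by (simp add: right_diff_distrib evS_def Vs_def ev_bp del: bp.simps)
  qed
qed

lemma I_rel:
  assumes p0: "\<phi> [] = 1"
  shows "eta_tilde \<phi> (\<lambda>n. replicate n a) * (1 + fps_X * evS \<phi> a (Vs \<beta>)) = ett \<beta> + evS \<phi> a (Vs \<beta>)"
proof -
  let ?M = "Abs_fps (\<lambda>n. \<phi> (replicate n a))"
  let ?e = "eta_tilde \<phi> (\<lambda>n. replicate n a)"
  let ?G = "evS \<phi> a (Vs \<beta>)"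
  let ?p = "ett \<beta>"
  have h1: "?M * (1 - fps_X * ?e) = 1"
    using boolM[of \<phi> "\<lambda>n. replicate n a"] moment_rep[of \<phi> a, OF p0] eta_X by simp
  have h2: "?M * (1 - fps_X * ?p) = 1 + fps_X * ?G" by (rule Mpsi[of \<phi> a \<beta>, OF p0])
  have "(1 + fps_X * ?G) * (1 - fps_X * ?e) = (1 - fps_X * ?p) * (?M * (1 - fps_X * ?e))"
    by (simp only: h2[symmetric] mult_ac)
  also have "\<dots> = 1 - fps_X * ?p" by (simp add: h1)
  finally have "fps_X * (?G - ?e - fps_X * ?G * ?e + ?p) = 0"
    by (simp add: algebra_simps)
  then have "?G - ?e - fps_X * ?G * ?e + ?p = 0" by simp
  then show ?thesis by (simp add: algebra_simps)
qed


lemma alt0S_fix: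
  assumes hK: "K = B + C * K" and C0: "C $ 0 = 0" and hB: "alt0S \<psi> L B"
    and hC: "\<And>W. alt0S \<psi> L W \<Longrightarrow> alt0S \<psi> L (C * W)"
  shows "alt0S \<psi> L K"
proof -
  have "alt0 \<psi> L (K $ n)" for n
  proof (induction n rule: less_induct)
    case (less n)
    define Kt where "Kt = Abs_fps (\<lambda>j. if j < n then K $ j else 0)"
    have aKt: "alt0S \<psi> L Kt" unfolding alt0S_def Kt_def using less.IH by (simp add: alt0_zero)
    have "(C * K) $ n = (C * Kt) $ n"
      unfolding fps_mult_nth
    proof (rule sum.cong)
      fix i assume "i \<in> {0..n}"
      then show "C $ i * K $ (n - i) = C $ i * Kt $ (n - i)"
        using C0 by (cases "i = 0") (auto simp: Kt_def)
    qed simp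
    then have "K $ n = B $ n + (C * Kt) $ n" by (subst hK) simp
    then show ?case using hB hC[OF aKt] by (simp add: alt0S_def alt0_add)
  qed
  then show ?thesis by (simp add: alt0S_def)
qed

lemma uniq_fix:
  fixes R Q :: "'a::ring_1 fps"
  assumes "R = 1 + fps_X * fps_const c * R" "Q = 1 + fps_X * fps_const c * Q"
  shows "R = Q"
proof -
  have "(R - Q) $ n = 0" for n
  proof (induction n)
    case 0
    have "R $ 0 = 1" "Q $ 0 = 1" by (subst assms(1), simp, subst assms(2), simp)
    then show ?case by simp
  next
    case (Suc n)
    have "R $ Suc n = c * R $ n" by (subst assms(1)) (simp add: mult.assoc)
    moreover have "Q $ Suc n = c * Q $ n" by (subst assms(2)) (simp add: mult.assoc)
    ultimately show ?case using Suc by (simp add: right_diff_distrib[symmetric])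
  qed
  then show ?thesis by (metis diff_eq_diff_eq diff_self fps_ext fps_zero_nth)
qed

lemma centS_Vs:
  assumes "\<psi> [] = 1"
  shows "centS \<psi> a (Vs (bool_cum (\<lambda>k. \<psi> (replicate k a))) oo cp w)"
  unfolding centS_def
proof
  fix n
  let ?\<beta> = "bool_cum (\<lambda>k. \<psi> (replicate k a))"
  have eq: "(Vs ?\<beta> oo cp w) $ n = (\<Sum>i=0..n. smult ((w ^ i) $ n) (Vs ?\<beta> $ i))"
    by (simp add: fps_compose_nth cp_power[symmetric] mult_pconst_right)
  show "ev \<psi> [(a, (Vs ?\<beta> oo cp w) $ n)] = 0"
    unfolding eq ev1_sum ev1_smult
    by (simp add: Vs_def bp_centered[of \<psi>, OF assms] del: bp.simps)
qed

lemma wX_rep: "wX = (\<lambda>n. replicate n LX)" by (simp add: fun_eq_iff wX_def)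
lemma wY_rep: "wY = (\<lambda>n. replicate n LY)" by (simp add: fun_eq_iff wY_def)

lemma embS_IdVc:
  assumes "w $ 0 = 0"
  shows "sc w * embS a Xp * embS a (Vs \<beta> oo cp w) =
         embS a (Vs \<beta> oo cp w) - embS a Xp + sc (ett \<beta> oo w)"
proof -
  have "embS a (cp w * Xp * (Vs \<beta> oo cp w)) = embS a ((Vs \<beta> oo cp w) - Xp + cp (ett \<beta> oo w))"
    by (simp only: IdVc[OF assms])
  then show ?thesis by (simp add: embS_mult embS_cp embS_diff embS_add)
qed

lemma compose_I:
  fixes e G p w :: "complex fps"
  assumes w0: "w $ 0 = 0" and I: "e * (1 + fps_X * G) = p + G"
  shows "(e oo w) * (1 + w * (G oo w)) = (p oo w) + (G oo w)"
proof -
  have "(e * (1 + fps_X * G)) oo w = (p + G) oo w" by (simp only: I)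
  then show ?thesis
    by (simp add: fps_compose_mult_distrib[OF w0] fps_compose_add_distrib
        fps_X_fps_compose_startby0[OF w0])
qed

lemma claim1:
  fixes \<phi> \<psi> :: functional and \<omega>X \<omega>Y :: "complex fps"
  assumes cf: "c_free \<phi> \<psi>"
    and wX0: "fps_nth \<omega>X 0 = 0" and wY0: "fps_nth \<omega>Y 0 = 0"
    and hwX: "\<omega>X = fps_X * (eta_tilde \<psi> wY oo \<omega>Y)"
    and hwY: "\<omega>Y = fps_X * (eta_tilde \<psi> wX oo \<omega>X)"
  shows "moment_fps \<phi> wXY =
           inverse (1 - fps_X * (eta_tilde \<phi> wX oo \<omega>X) * (eta_tilde \<phi> wY oo \<omega>Y))"
proof -
  have p0: "\<phi> [] = 1" and q0: "\<psi> [] = 1" using cfree_unital[OF cf] by auto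
  define \<beta>X where "\<beta>X = bool_cum (\<lambda>k. \<psi> (replicate k LX))"
  define \<beta>Y where "\<beta>Y = bool_cum (\<lambda>k. \<psi> (replicate k LY))"
  have etX: "eta_tilde \<psi> wX = ett \<beta>X" by (simp add: eta_tilde_ett \<beta>X_def wX_def)
  have etY: "eta_tilde \<psi> wY = ett \<beta>Y" by (simp add: eta_tilde_ett \<beta>Y_def wY_def)
  define a where "a = ett \<beta>Y oo \<omega>Y"
  define b where "b = ett \<beta>X oo \<omega>X"
  have hwX': "\<omega>X = fps_X * a" using hwX etY a_def by simp
  have hwY': "\<omega>Y = fps_X * b" using hwY etX b_def by simp
  define VXp where "VXp = Vs \<beta>X oo cp \<omega>X"
  define VYp where "VYp = Vs \<beta>Y oo cp \<omega>Y"
  define GX where "GX = evS \<phi> LX (Vs \<beta>X)"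
  define GY where "GY = evS \<phi> LY (Vs \<beta>Y)"
  define \<Gamma>X where "\<Gamma>X = GX oo \<omega>X"
  define \<Gamma>Y where "\<Gamma>Y = GY oo \<omega>Y"
  have evX: "evS \<phi> LX VXp = \<Gamma>X" by (simp add: VXp_def \<Gamma>X_def GX_def evS_compose)
  have evY: "evS \<phi> LY VYp = \<Gamma>Y" by (simp add: VYp_def \<Gamma>Y_def GY_def evS_compose)
  have centX: "centS \<psi> LX VXp" unfolding VXp_def \<beta>X_def by (rule centS_Vs[of \<psi>, OF q0])
  have centY: "centS \<psi> LY VYp" unfolding VYp_def \<beta>Y_def by (rule centS_Vs[of \<psi>, OF q0])
  define Xn where "Xn = embS LX Xp"
  define Yn where "Yn = embS LY Xp"
  define VXn where "VXn = embS LX VXp"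
  define VYn where "VYn = embS LY VYp"
  have hXn: "sc \<omega>X * Xn * VXn = VXn - Xn + sc b"
    unfolding Xn_def VXn_def VXp_def b_def by (rule embS_IdVc[OF wX0])
  have hYn: "sc \<omega>Y * Yn * VYn = VYn - Yn + sc a"
    unfolding Yn_def VYn_def VYp_def a_def by (rule embS_IdVc[OF wY0])
  define Lf where "Lf = inverse (1 - fps_X * a * b)"
  have hLf: "Lf * (1 - fps_X * a * b) = 1"
    unfolding Lf_def by (rule inverse_mult_eq_1) simp
  define C where "C = fps_X * VXn * VYn"
  have C0: "C $ 0 = 0" by (simp add: C_def)
  obtain K where hK: "K = (1 + sc \<omega>X * VXn) + C * K"
    using fixpoint_exists[OF C0] by blast
  have aK: "alt0S \<psi> LX K"
  proof (rule alt0S_fix[OF hK C0])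
    show "alt0S \<psi> LX (1 + sc \<omega>X * VXn)"
      unfolding VXn_def
      by (intro alt0S_add alt0S_one alt0S_sc alt0S_embS[OF centX, of LY]) simp
  next
    fix W assume aW: "alt0S \<psi> LX W"
    have a1: "alt0S \<psi> LY (VYn * W)" unfolding VYn_def using alt0S_mult[OF centY aW] by simp
    have "alt0S \<psi> LX (VXn * (VYn * W))" unfolding VXn_def using alt0S_mult[OF centX a1] by simp
    then show "alt0S \<psi> LX (C * W)" unfolding C_def by (simp add: mult.assoc alt0S_X)
  qed
  define Q where "Q = sc Lf * (1 + sc \<omega>Y * VYn) * K"
  have XY: "Xn * Yn = fps_const (sgl [LX, LY] 1)"
    by (simp add: Xn_def Yn_def Xp_def embS_const emb_X sgl_mult)
  have hQ: "Q = 1 + fps_X * (Xn * Yn) * Q"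
    unfolding Q_def
  proof (rule Q_alg)
    show "sc a * F = F * sc a" for F by (rule sc_comm)
    show "sc b * F = F * sc b" for F by (rule sc_comm)
    show "sc \<omega>X * F = F * sc \<omega>X" for F by (rule sc_comm)
    show "sc \<omega>Y * F = F * sc \<omega>Y" for F by (rule sc_comm)
    show "sc Lf * F = F * sc Lf" for F by (rule sc_comm)
    show "fps_X * F = F * fps_X" for F :: ns by (rule X_comm)
    show "sc \<omega>X * Xn * VXn = VXn - Xn + sc b" by (rule hXn)
    show "sc \<omega>Y * Yn * VYn = VYn - Yn + sc a" by (rule hYn)
    show "sc \<omega>X = fps_X * sc a" by (simp add: hwX' sc_mult sc_X)
    show "sc \<omega>Y = fps_X * sc b" by (simp add: hwY' sc_mult sc_X)
    show "sc Lf * (1 - fps_X * sc a * sc b) = 1"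
      using arg_cong[OF hLf, of sc] by (simp add: sc_mult sc_diff sc_one sc_X)
    show "K = 1 + sc \<omega>X * VXn + fps_X * VXn * VYn * K" using hK by (simp add: C_def)
  qed
  define R where "R = Abs_fps (\<lambda>n. sgl (wXY n) 1)"
  have hR: "R = 1 + fps_X * (Xn * Yn) * R"
  proof (rule fps_ext)
    fix n show "R $ n = (1 + fps_X * (Xn * Yn) * R) $ n"
      by (cases n) (simp_all add: R_def XY mult.assoc wXY_def sgl_nil_1 sgl_mult)
  qed
  have RQ: "R = Q" using uniq_fix[OF hR[unfolded XY] hQ[unfolded XY]] .
  have evR: "evalS \<phi> R = moment_fps \<phi> wXY"
    by (rule fps_ext) (simp add: evalS_def R_def moment_fps_def evalA_single wXY_def p0)
  define E where "E = evalS \<phi> K"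
  have evYK: "evalS \<phi> (VYn * K) = \<Gamma>Y * E"
  proof -
    have "evalS \<phi> (embS LY VYp * K) = evS \<phi> LY VYp * evalS \<phi> K"
      by (rule evalS_mult_alt[OF cf centY aK]) simp
    then show ?thesis by (simp add: VYn_def evY E_def)
  qed
  have aYK: "alt0S \<psi> LY (VYn * K)" unfolding VYn_def using alt0S_mult[OF centY aK] by simp
  have evXYK: "evalS \<phi> (VXn * (VYn * K)) = \<Gamma>X * (\<Gamma>Y * E)"
  proof -
    have "evalS \<phi> (embS LX VXp * (VYn * K)) = evS \<phi> LX VXp * evalS \<phi> (VYn * K)"
      by (rule evalS_mult_alt[OF cf centX aYK]) simp
    then show ?thesis by (simp add: VXn_def evX evYK)
  qed
  have evVX: "evalS \<phi> VXn = \<Gamma>X" by (simp add: VXn_def evalS_embS evX)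
  have evK: "E = 1 + \<omega>X * \<Gamma>X + fps_X * (\<Gamma>X * (\<Gamma>Y * E))"
  proof -
    have "E = evalS \<phi> ((1 + sc \<omega>X * VXn) + fps_X * (VXn * (VYn * K)))"
      unfolding E_def by (subst hK) (simp add: C_def mult.assoc)
    also have "\<dots> = 1 + \<omega>X * \<Gamma>X + fps_X * (\<Gamma>X * (\<Gamma>Y * E))"
      by (simp add: evalS_add evalS_sc evalS_X evalS_one[of \<phi>, OF p0] evXYK evVX)
    finally show ?thesis .
  qed
  have evQ: "evalS \<phi> Q = Lf * ((1 + \<omega>Y * \<Gamma>Y) * E)"
  proof -
    have "Q = sc Lf * (K + sc \<omega>Y * (VYn * K))"
      by (simp add: Q_def distrib_left distrib_right mult.assoc)
    then show ?thesis
      by (simp add: evalS_sc evalS_add evYK E_def algebra_simps)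
  qed
  define A where "A = eta_tilde \<phi> wX oo \<omega>X"
  define B where "B = eta_tilde \<phi> wY oo \<omega>Y"
  have IA: "A * (1 + \<omega>X * \<Gamma>X) = b + \<Gamma>X"
    unfolding A_def \<Gamma>X_def b_def GX_def wX_rep
    by (rule compose_I[OF wX0 I_rel[of \<phi>, OF p0]])
  have IB: "B * (1 + \<omega>Y * \<Gamma>Y) = a + \<Gamma>Y"
    unfolding B_def \<Gamma>Y_def a_def GY_def wY_rep
    by (rule compose_I[OF wY0 I_rel[of \<phi>, OF p0]])
  have key: "Lf * (1 + \<omega>X * \<Gamma>X) * (1 + \<omega>Y * \<Gamma>Y) * (1 - fps_X * A * B) = 1 - fps_X * \<Gamma>X * \<Gamma>Y"
  proof -
    have "(1 + \<omega>X * \<Gamma>X) * (1 + \<omega>Y * \<Gamma>Y) * (1 - fps_X * A * B) =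
        (1 + \<omega>X * \<Gamma>X) * (1 + \<omega>Y * \<Gamma>Y) - fps_X * (A * (1 + \<omega>X * \<Gamma>X)) * (B * (1 + \<omega>Y * \<Gamma>Y))"
      by (simp add: algebra_simps)
    also have "\<dots> = (1 + \<omega>X * \<Gamma>X) * (1 + \<omega>Y * \<Gamma>Y) - fps_X * (b + \<Gamma>X) * (a + \<Gamma>Y)"
      by (simp only: IA IB)
    also have "\<dots> = (1 - fps_X * a * b) * (1 - fps_X * \<Gamma>X * \<Gamma>Y)"
      by (simp add: hwX' hwY' algebra_simps power2_eq_square)
    finally have e: "(1 + \<omega>X * \<Gamma>X) * (1 + \<omega>Y * \<Gamma>Y) * (1 - fps_X * A * B) =
        (1 - fps_X * a * b) * (1 - fps_X * \<Gamma>X * \<Gamma>Y)" .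
    have "Lf * (1 + \<omega>X * \<Gamma>X) * (1 + \<omega>Y * \<Gamma>Y) * (1 - fps_X * A * B) =
        Lf * ((1 + \<omega>X * \<Gamma>X) * (1 + \<omega>Y * \<Gamma>Y) * (1 - fps_X * A * B))"
      by (simp only: mult.assoc)
    also have "\<dots> = Lf * ((1 - fps_X * a * b) * (1 - fps_X * \<Gamma>X * \<Gamma>Y))"
      by (simp only: e)
    also have "\<dots> = (Lf * (1 - fps_X * a * b)) * (1 - fps_X * \<Gamma>X * \<Gamma>Y)"
      by (rule mult.assoc[symmetric])
    also have "\<dots> = 1 - fps_X * \<Gamma>X * \<Gamma>Y" by (simp only: hLf mult_1_left)
    finally show ?thesis .
  qed
  define Mq where "Mq = Lf * ((1 + \<omega>Y * \<Gamma>Y) * E)"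
  have E2: "E * (1 - fps_X * \<Gamma>X * \<Gamma>Y) = 1 + \<omega>X * \<Gamma>X"
    using evK by (simp add: algebra_simps)
  have "(Mq * (1 - fps_X * A * B)) * (1 - fps_X * \<Gamma>X * \<Gamma>Y) =
        Lf * (1 + \<omega>Y * \<Gamma>Y) * (1 - fps_X * A * B) * (E * (1 - fps_X * \<Gamma>X * \<Gamma>Y))"
    by (simp add: Mq_def mult_ac)
  also have "\<dots> = Lf * (1 + \<omega>Y * \<Gamma>Y) * (1 - fps_X * A * B) * (1 + \<omega>X * \<Gamma>X)"
    by (simp only: E2)
  also have "\<dots> = Lf * (1 + \<omega>X * \<Gamma>X) * (1 + \<omega>Y * \<Gamma>Y) * (1 - fps_X * A * B)"
    by (simp only: mult_ac)
  also have "\<dots> = 1 * (1 - fps_X * \<Gamma>X * \<Gamma>Y)"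
    by (simp only: key mult_1_left)
  finally have "Mq * (1 - fps_X * A * B) = 1"
    by (rule mult_right_cancel[THEN iffD1, rotated]) (simp add: fps_eq_iff exI[of _ 0])
  then have "inverse (1 - fps_X * A * B) = Mq"
    by (intro fps_inverse_unique) (simp add: mult.commute)
  then show ?thesis
    using evR RQ evQ by (simp add: Mq_def A_def B_def)
qed


lemma eta_from_moment:
  assumes "moment_fps \<theta> T = inverse (1 - fps_X * g)"
  shows "eta_tilde \<theta> T = g"
proof -
  have f0: "(1 - fps_X * g) $ 0 \<noteq> 0" by simp
  have "inverse (moment_fps \<theta> T) = 1 - eta \<theta> T"
    by (rule fps_inverse_unique) (rule boolM)
  then have "1 - eta \<theta> T = 1 - fps_X * g"
    using assms f0 by simp
  then have "fps_X * eta_tilde \<theta> T = fps_X * g" by (simp add: eta_X)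
  then show ?thesis by simp
qed

lemma eta_tilde_0: "eta_tilde \<theta> T $ 0 = \<theta> (T 1)"
  by (simp add: eta_tilde_def eta_def bool_cum_pos)

lemma inv_sub:
  fixes e w f :: "complex fps"
  assumes e0: "e $ 0 = 0" and e1: "e $ 1 \<noteq> 0" and w0: "w $ 0 = 0"
    and f0: "f $ 0 = 0" and f1: "f $ 1 \<noteq> 0" and ew: "e oo w = f"
  shows "w oo fps_inv f = fps_inv e"
proof -
  let ?I = "fps_inv f" and ?J = "fps_inv e"
  have I0: "?I $ 0 = 0" by (simp add: fps_inv_def)
  have J0: "?J $ 0 = 0" by (simp add: fps_inv_def)
  let ?W = "w oo ?I"
  have W0: "?W $ 0 = 0" using w0 by simp
  have "e oo ?W = (e oo w) oo ?I" by (rule fps_compose_assoc[OF I0 w0])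
  also have "\<dots> = fps_X" using ew fps_inv_right[OF f0 f1] by simp
  finally have h: "e oo ?W = fps_X" .
  have "?J oo (e oo ?W) = (?J oo e) oo ?W" by (rule fps_compose_assoc[OF W0 e0])
  also have "\<dots> = ?W" using fps_inv[OF e0 e1] fps_X_fps_compose_startby0[OF W0] by simp
  finally show ?thesis using h by simp
qed

lemma claim2:
  fixes \<phi> \<psi> :: functional and \<omega>X \<omega>Y :: "complex fps"
  assumes cf: "c_free \<phi> \<psi>"
    and wX0: "fps_nth \<omega>X 0 = 0" and wY0: "fps_nth \<omega>Y 0 = 0"
    and hwX: "\<omega>X = fps_X * (eta_tilde \<psi> wY oo \<omega>Y)"
    and hwY: "\<omega>Y = fps_X * (eta_tilde \<psi> wX oo \<omega>X)"
    and nX: "\<psi> [LX] \<noteq> 0" and nY: "\<psi> [LY] \<noteq> 0"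
  shows "Sigma_tr \<phi> \<psi> wXY = Sigma_tr \<phi> \<psi> wX * Sigma_tr \<phi> \<psi> wY"
proof -
  define a where "a = eta_tilde \<psi> wY oo \<omega>Y"
  define b where "b = eta_tilde \<psi> wX oo \<omega>X"
  define A where "A = eta_tilde \<phi> wX oo \<omega>X"
  define B where "B = eta_tilde \<phi> wY oo \<omega>Y"
  have m1: "moment_fps \<phi> wXY = inverse (1 - fps_X * (A * B))"
    using claim1[OF cf wX0 wY0 hwX hwY] by (simp add: A_def B_def mult.assoc)
  have m2: "moment_fps \<psi> wXY = inverse (1 - fps_X * (b * a))"
    using claim1[OF cfree_self[OF cf] wX0 wY0 hwX hwY] by (simp add: a_def b_def mult.assoc)
  have etXY: "eta_tilde \<phi> wXY = A * B" by (rule eta_from_moment[OF m1])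
  have epXY: "eta \<psi> wXY = fps_X * (b * a)" using eta_from_moment[OF m2] eta_X by simp
  have a0: "a $ 0 = \<psi> [LY]" by (simp add: a_def eta_tilde_0 wY_def)
  have b0: "b $ 0 = \<psi> [LX]" by (simp add: b_def eta_tilde_0 wX_def)
  have f0: "eta \<psi> wXY $ 0 = 0" by (simp add: epXY)
  have f1: "eta \<psi> wXY $ 1 \<noteq> 0" using nX nY a0 b0 by (simp add: epXY)
  have eX0: "eta \<psi> wX $ 0 = 0" by (simp add: eta_def)
  have eX1: "eta \<psi> wX $ 1 \<noteq> 0" using nX by (simp add: eta_X eta_tilde_0 wX_def)
  have eY0: "eta \<psi> wY $ 0 = 0" by (simp add: eta_def)
  have eY1: "eta \<psi> wY $ 1 \<noteq> 0" using nY by (simp add: eta_X eta_tilde_0 wY_def)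
  have hwX': "\<omega>X = fps_X * a" using hwX a_def by simp
  have hwY': "\<omega>Y = fps_X * b" using hwY b_def by simp
  have ewX: "eta \<psi> wX oo \<omega>X = eta \<psi> wXY"
  proof -
    have "eta \<psi> wX oo \<omega>X = (fps_X oo \<omega>X) * b"
      by (simp only: eta_X fps_compose_mult_distrib[OF wX0] b_def)
    also have "\<dots> = \<omega>X * b" by (simp only: fps_X_fps_compose_startby0[OF wX0])
    also have "\<dots> = eta \<psi> wXY" by (simp only: hwX' epXY mult_ac)
    finally show ?thesis .
  qed
  have ewY: "eta \<psi> wY oo \<omega>Y = eta \<psi> wXY"
  proof -
    have "eta \<psi> wY oo \<omega>Y = (fps_X oo \<omega>Y) * a"
      by (simp only: eta_X fps_compose_mult_distrib[OF wY0] a_def)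
    also have "\<dots> = \<omega>Y * a" by (simp only: fps_X_fps_compose_startby0[OF wY0])
    also have "\<dots> = eta \<psi> wXY" by (simp only: hwY' epXY mult_ac)
    finally show ?thesis .
  qed
  let ?I = "fps_inv (eta \<psi> wXY)"
  have I0: "?I $ 0 = 0" by (simp add: fps_inv_def)
  have sX: "\<omega>X oo ?I = fps_inv (eta \<psi> wX)" by (rule inv_sub[OF eX0 eX1 wX0 f0 f1 ewX])
  have sY: "\<omega>Y oo ?I = fps_inv (eta \<psi> wY)" by (rule inv_sub[OF eY0 eY1 wY0 f0 f1 ewY])
  have "Sigma_tr \<phi> \<psi> wXY = (A oo ?I) * (B oo ?I)"
    by (simp add: Sigma_tr_def etXY fps_compose_mult_distrib[OF I0])
  also have "A oo ?I = Sigma_tr \<phi> \<psi> wX"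
    unfolding A_def Sigma_tr_def using fps_compose_assoc[OF I0 wX0] sX by simp
  also have "B oo ?I = Sigma_tr \<phi> \<psi> wY"
    unfolding B_def Sigma_tr_def using fps_compose_assoc[OF I0 wY0] sY by simp
  finally show ?thesis .
qed

theorem proposition7:
  fixes \<phi> \<psi> :: functional and \<omega>X \<omega>Y :: "complex fps"
  assumes "c_free \<phi> \<psi>"
    and "fps_nth \<omega>X 0 = 0" and "fps_nth \<omega>Y 0 = 0"
    and "\<omega>X = fps_X * (eta_tilde \<psi> wY oo \<omega>Y)"
    and "\<omega>Y = fps_X * (eta_tilde \<psi> wX oo \<omega>X)"
  shows "moment_fps \<phi> wXY =
           inverse (1 - fps_X * (eta_tilde \<phi> wX oo \<omega>X) * (eta_tilde \<phi> wY oo \<omega>Y))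
       \<and> (\<psi> [LX] \<noteq> 0 \<and> \<psi> [LY] \<noteq> 0 \<longrightarrow>
           Sigma_tr \<phi> \<psi> wXY = Sigma_tr \<phi> \<psi> wX * Sigma_tr \<phi> \<psi> wY)"
  using claim1[OF assms] claim2[OF assms] by blast

end
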